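(* Let $x\in\mathbb{R}$ and let $\theta\colon[x,+\infty)\to\mathbb{R}$ be a continuous sublinear function. If $y$ is a real number with $y<\theta(t)$ for every $t\in[x,+\infty)$, then the set $$E(x,y,\theta)=\left\{t>x\ \middle|\ \forall s\in[x,t],\ \theta(s)\ge\frac{\theta(t)-y}{t-x}(s-x)+y\right\}$$ is not bounded above.
   Context: A function $\theta$ is sublinear if $\theta(t)=o(t)$ as $t\to+\infty$. *)

theory Defs
  imports "HOL-Analysis.Analysis" "HOL-Library.Landau_Symbols"
begin

definition sublinear :: "(real \<Rightarrow> real) \<Rightarrow> bool" where
  "sublinear \<theta> \<longleftrightarrow> \<theta> \<in> o[at_top](\<lambda>t. t)"

definition E_set :: "real \<Rightarrow> real \<Rightarrow> (real \<Rightarrow> real) \<Rightarrow> real set" where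
  "E_set x y \<theta> = {t. t > x \<and> (\<forall>s\<in>{x..t}. \<theta> s \<ge> (\<theta> t - y) / (t - x) * (s - x) + y)}"

end

theory Submission
  imports Defs
begin

lemma key:
  fixes x y M :: real and \<theta> :: "real \<Rightarrow> real"
  assumes cont: "continuous_on {x..} \<theta>"
    and sl: "sublinear \<theta>"
    and pos: "\<forall>t\<in>{x..}. y < \<theta> t"
    and M: "M > x"
  shows "\<exists>t\<in>E_set x y \<theta>. t \<ge> M"
proof -
  define g where "g s = (\<theta> s - y) / (s - x)" for s
  have c1: "continuous_on {x..M} \<theta>" using cont by (rule continuous_on_subset) auto
  obtain s0 where s0: "s0 \<in> {x..M}" "\<forall>s\<in>{x..M}. \<theta> s0 \<le> \<theta> s"
    using continuous_attains_inf[OF compact_Icc _ c1] M by fastforce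
  define m where "m = \<theta> s0 - y"
  have m: "m > 0" using pos s0 by (auto simp: m_def)
  define c where "c = m / (M - x)"
  have c: "c > 0" using m M by (simp add: c_def)
  have low: "g s \<ge> c" if "x < s" "s \<le> M" for s
  proof -
    have "\<theta> s - y \<ge> m" using s0 that by (auto simp: m_def)
    hence "(\<theta> s - y) / (s - x) \<ge> m / (s - x)" using that by (simp add: divide_right_mono)
    moreover have "m / (s - x) \<ge> m / (M - x)" using that m by (intro divide_left_mono) auto
    ultimately show ?thesis by (simp add: g_def c_def)
  qed
  have "eventually (\<lambda>t. norm (\<theta> t) \<le> (c/2) * norm t) at_top"
    using sl c unfolding sublinear_def by (intro landau_o.smallD) auto
  then obtain N where N: "\<And>t. t \<ge> N \<Longrightarrow> norm (\<theta> t) \<le> (c/2) * norm t"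
    by (auto simp: eventually_at_top_linorder)
  define T where "T = max (max N (M+1)) (max 0 (2*(c*x - y)/c + 1))"
  have TM: "T > M" "T \<ge> 0" "T \<ge> N" by (auto simp: T_def)
  have "c * T > 2*(c*x - y)"
  proof -
    have "T > 2*(c*x - y)/c" by (auto simp: T_def)
    thus ?thesis using c by (simp add: pos_divide_less_eq mult.commute)
  qed
  moreover have "\<theta> T \<le> (c/2) * T" using N[OF TM(3)] TM(2) by auto
  ultimately have "\<theta> T - y < c * (T - x)" by (simp add: algebra_simps)
  hence gT: "g T < c" using TM M by (simp add: g_def divide_less_eq)
  have cg: "continuous_on {M..T} g" unfolding g_def using M
    by (intro continuous_intros continuous_on_subset[OF cont]) auto
  obtain t where t: "t \<in> {M..T}" "\<forall>s\<in>{M..T}. g t \<le> g s"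
    using continuous_attains_inf[OF compact_Icc _ cg] TM by fastforce
  have "g t \<le> g T" using t(2) TM(1) by auto
  hence gt: "g t < c" using gT by linarith
  have "t \<in> E_set x y \<theta>"
    unfolding E_set_def
  proof (intro CollectI conjI ballI)
    show tx: "t > x" using t M by auto
    fix s assume s: "s \<in> {x..t}"
    show "\<theta> s \<ge> (\<theta> t - y) / (t - x) * (s - x) + y"
    proof (cases "s = x")
      case True thus ?thesis using pos by (auto intro: less_imp_le)
    next
      case False
      hence sx: "s > x" using s by auto
      have "g s \<ge> g t"
      proof (cases "s \<le> M")
        case True thus ?thesis using low[OF sx True] gt by auto
      next
        case False thus ?thesis using t s by auto
      qed
      hence "(\<theta> t - y) / (t - x) \<le> (\<theta> s - y) / (s - x)" by (simp add: g_def)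
      hence "(\<theta> t - y) / (t - x) * (s - x) \<le> \<theta> s - y" using sx
        by (simp add: le_divide_eq)
      thus ?thesis by simp
    qed
  qed
  thus ?thesis using t by auto
qed

theorem lemma3p1:
  fixes x y :: real and \<theta> :: "real \<Rightarrow> real"
  assumes "continuous_on {x..} \<theta>"
    and "sublinear \<theta>"
    and "\<forall>t\<in>{x..}. y < \<theta> t"
  shows "\<not> bdd_above (E_set x y \<theta>)"
proof
  assume "bdd_above (E_set x y \<theta>)"
  then obtain B where B: "\<And>t. t \<in> E_set x y \<theta> \<Longrightarrow> t \<le> B" by (auto simp: bdd_above_def)
  obtain t where "t \<in> E_set x y \<theta>" "t \<ge> max B x + 1"
    using key[OF assms, of "max B x + 1"] by fastforce
  with B show False by force
qed

end
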